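(* Let $d \ge 2$, let $P\colon\mathbb{R}\to\mathbb{R}^d$ be a polynomial, $K \geq 0$ an integer, $I = (a,b)$ with $a \geq 0$, $b - a = 1$, $\lambda_P(t) := t^{2K/(d(d+1))}$, and $Af(x,r) := \int_I f(x - rP(t))\lambda_P(t)\,\mathrm{d}t$. Let $E \subset \mathbb{R}^d$, $F \subset \mathbb{R}^d\times[1,2]$ be Borel sets of finite positive measure with $\langle A\chi_E,\chi_F\rangle \ne 0$, and set $\alpha := \langle A\chi_E,\chi_F\rangle/|F|$, $\beta := \langle A\chi_E,\chi_F\rangle/|E|$, assuming $\alpha > \beta$; let $\kappa := d(d+1)/(2K + d(d+1))$. Suppose $(x_0,r_0) \in F$ and $\{\Omega_j\}_{j=1}^{d+1}$ is a type 1 tower of height $d+1$ with the following properties (with implicit constants depending only on $d$ and $K$): 1) whenever $(\mathbf{r}_j,\mathbf{t}_j) \in \Omega_j$, one has $\alpha^\kappa \lesssim t_1 < t_2 < \dots < t_j$; 2) for odd $1 \le j \le d+1$: (i) $\Phi_j(\Omega_j) \subseteq E$; (ii) $\mu_P(\Omega_1) \gtrsim \alpha$ and, if $j>1$, $\mu_P(\Omega_j(\mathbf{r}_{j-1},\mathbf{t}_{j-1})) \gtrsim \alpha$ for all $(\mathbf{r}_{j-1},\mathbf{t}_{j-1}) \in \Omega_{j-1}$; (iii) if $j>1$ and $(\mathbf{r}_j,\mathbf{t}_j)\in\Omega_j$ then $\int_{t_{j-1}}^{t_j}\lambda_P(t)\,\mathrm{d}t \gtrsim \alpha$; 3) for even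 $1 < j \le d+1$: (i) $\Phi_j(\Omega_j) \subseteq F$; (ii) $\nu_P(\Omega_j(\mathbf{r}_{j-1},\mathbf{t}_{j-1})) \gtrsim \beta$ for all $(\mathbf{r}_{j-1},\mathbf{t}_{j-1}) \in \Omega_{j-1}$; (iii) if $(\mathbf{r}_j,\mathbf{t}_j)\in\Omega_j$ then $\int_{t_{j-1}}^{t_j}\lambda_P(t)\,\mathrm{d}t \gtrsim \beta$. Then: (i) if $1 < j \le d+1$ is odd, for all $(\mathbf{r}_j,\mathbf{t}_j)\in\Omega_j$ one has $t_j - t_i \gtrsim \alpha\, t_i^{-2K/(d(d+1))}$ for $1 \le i \le j-1$; (ii) if $1 < j \le d+1$ is even, for all $(\mathbf{r}_j,\mathbf{t}_j)\in\Omega_j$ one has $t_j - t_{j-1} \gtrsim \beta\, t_{j-1}^{-2K/(d(d+1))}$ and $t_j - t_i \gtrsim \alpha\, t_i^{-2K/(d(d+1))}$ for $1 \le i \le j-2$. The implicit constants in the conclusion depend only on $d$, $K$ and those in the hypotheses.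
   Context: $\mu_P$ is the measure $\lambda_P(t)\,\mathrm{d}t$ on $I$ and $\nu_P$ is the product of Lebesgue measure on $[1,2]$ with $\mu_P$. Write $\lfloor x\rfloor$ for the integer part. A type 1 tower of height $D$ is a collection of Borel sets $\Omega_j \subseteq [1,2]^{\lfloor j/2\rfloor} \times I^j$ ($1 \le j \le D$) of positive measure, whose elements are written $(\mathbf{r}_j,\mathbf{t}_j)$ with $\mathbf{r}_j = (r_1,\dots,r_{\lfloor j/2\rfloor})$, $\mathbf{t}_j = (t_1,\dots,t_j)$, such that for $1<j\le D$, $(\mathbf{r}_j,\mathbf{t}_j)\in\Omega_j$ implies $(\mathbf{r}_{j-1},\mathbf{t}_{j-1})\in\Omega_{j-1}$. For $(\mathbf{r}_{j-1},\mathbf{t}_{j-1})\in\Omega_{j-1}$ the fibre $\Omega_j(\mathbf{r}_{j-1},\mathbf{t}_{j-1})$ is $\{t_j\in I : (\mathbf{r}_j,\mathbf{t}_j)\in\Omega_j\}$ if $j$ is odd and $\{(r_{j/2},t_j)\in[1,2]\times I : (\mathbf{r}_j,\mathbf{t}_j)\in\Omega_j\}$ if $j$ is even. Given $(x_0,r_0)$, set $\Psi_j(\mathbf{r}_j,\mathbf{t}_j) := x_0 + \sum_{k=1}^j(-1)^k r_{\lfloor k/2\rfloor}P(t_k)$ (so the $k=1$ term uses the given $r_0$), and define $\Phi_j := \Psi_j$ on $\Omega_j$ for $j$ odd and $\Phi_j(\mathbf{r}_j,\mathbf{t}_j) := (\Psi_j(\mathbf{r}_j,\mathbf{t}_j),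 r_{j/2}) \in \mathbb{R}^d\times[1,2]$ for $j$ even. $X \lesssim Y$ means $X \le CY$ for a constant $C$ as specified. *)

theory Defs
  imports "HOL-Analysis.Analysis" "HOL-Computational_Algebra.Polynomial"
begin

definition lamP :: "nat \<Rightarrow> nat \<Rightarrow> real \<Rightarrow> real" where
  "lamP d K t = t powr (real (2 * K) / real (d * (d + 1)))"

definition muP :: "nat \<Rightarrow> nat \<Rightarrow> real measure" where
  "muP d K = density lborel (\<lambda>t. ennreal (lamP d K t))"

definition nuP :: "nat \<Rightarrow> nat \<Rightarrow> (real \<times> real) measure" where
  "nuP d K = lborel \<Otimes>\<^sub>M muP d K"

definition Apair :: "nat \<Rightarrow> nat \<Rightarrow> real \<Rightarrow> (real \<Rightarrow> real^'n) \<Rightarrow> (real^'n) set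
    \<Rightarrow> ((real^'n) \<times> real) set \<Rightarrow> real" where
  "Apair d K a P E F =
     (\<integral>xr. indicator F xr *
        (\<integral>t. indicator {a<..<a+1} t * indicator E (fst xr - snd xr *\<^sub>R P t) * lamP d K t \<partial>lborel)
      \<partial>lborel)"

text \<open>Psi_j; r is indexed from 1, the k=1 term uses r0.\<close>
definition Psi :: "real^'n \<Rightarrow> real \<Rightarrow> (real \<Rightarrow> real^'n) \<Rightarrow> nat \<Rightarrow> (nat \<Rightarrow> real) \<Rightarrow> (nat \<Rightarrow> real) \<Rightarrow> real^'n" where
  "Psi x0 r0 P j r t =
     x0 + (\<Sum>k=1..j. ((-1) ^ k * (if k div 2 = 0 then r0 else r (k div 2))) *\<^sub>R P (t k))"

text \<open>Points of Omega_j are pairs (r,t) of extensional functions,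
  r on {1..floor(j/2)}, t on {1..j}.\<close>
definition tower_space :: "nat \<Rightarrow> ((nat \<Rightarrow> real) \<times> (nat \<Rightarrow> real)) measure" where
  "tower_space j = PiM {1..j div 2} (\<lambda>_. lborel) \<Otimes>\<^sub>M PiM {1..j} (\<lambda>_. lborel)"

definition type1_tower :: "real \<Rightarrow> nat \<Rightarrow> (nat \<Rightarrow> ((nat \<Rightarrow> real) \<times> (nat \<Rightarrow> real)) set) \<Rightarrow> bool" where
  "type1_tower a D \<Omega> \<longleftrightarrow>
     (\<forall>j\<in>{1..D}. \<Omega> j \<in> sets (tower_space j) \<and>
        \<Omega> j \<subseteq> (PiE {1..j div 2} (\<lambda>_. {1..2})) \<times> (PiE {1..j} (\<lambda>_. {a<..<a+1})) \<and>
        emeasure (tower_space j) (\<Omega> j) > 0) \<and>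
     (\<forall>j\<in>{2..D}. \<forall>(r,t)\<in>\<Omega> j. (restrict r {1..(j-1) div 2}, restrict t {1..j-1}) \<in> \<Omega> (j-1))"

text \<open>Fibres over (r_{j-1}, t_{j-1}); for j = 1 the base point is the empty tuple.\<close>
definition fibre_odd :: "real \<Rightarrow> (nat \<Rightarrow> ((nat \<Rightarrow> real) \<times> (nat \<Rightarrow> real)) set) \<Rightarrow> nat
    \<Rightarrow> (nat \<Rightarrow> real) \<Rightarrow> (nat \<Rightarrow> real) \<Rightarrow> real set" where
  "fibre_odd a \<Omega> j r t = {s \<in> {a<..<a+1}. (r, t(j := s)) \<in> \<Omega> j}"

definition fibre_even :: "real \<Rightarrow> (nat \<Rightarrow> ((nat \<Rightarrow> real) \<times> (nat \<Rightarrow> real)) set) \<Rightarrow> nat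
    \<Rightarrow> (nat \<Rightarrow> real) \<Rightarrow> (nat \<Rightarrow> real) \<Rightarrow> (real \<times> real) set" where
  "fibre_even a \<Omega> j r t =
     {(\<rho>, s) \<in> {1..2} \<times> {a<..<a+1}. (r(j div 2 := \<rho>), t(j := s)) \<in> \<Omega> j}"

end

theory Submission imports Defs begin

lemma int_bound:
  fixes g :: real
  assumes "0 < u" "u \<le> v" "g \<ge> 0"
  shows "integral {u..v} (\<lambda>t. t powr g) \<le> (v - u) * v powr g"
proof -
  have cont: "continuous_on {u..v} (\<lambda>t. t powr g)"
    using assms by (intro continuous_intros) auto
  have "integral {u..v} (\<lambda>t. t powr g) \<le> integral {u..v} (\<lambda>t. v powr g)"
    using assms by (intro integral_le integrable_continuous_interval cont) (auto intro!: powr_mono2)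
  also have "\<dots> = (v - u) * v powr g" using assms by simp
  finally show ?thesis .
qed

lemma core:
  fixes s u v T g X c c' :: real
  assumes "0 < s" "s \<le> u" "u \<le> v" "v \<le> T" "g \<ge> 0" "X > 0" "c > 0" "c' > 0"
    "c * X \<le> integral {u..v} (\<lambda>t. t powr g)" "c' * X \<le> s powr (1 + g)"
  shows "min (c / 2 powr g) c' * X * s powr (- g) \<le> T - s"
proof -
  have "c * X \<le> (v - u) * v powr g" using int_bound[of u v g] assms by force
  also have "\<dots> \<le> (T - s) * T powr g"
    using assms by (intro mult_mono powr_mono2) auto
  finally have A: "c * X \<le> (T - s) * T powr g" .
  have sp: "s powr (- g) > 0" using assms by simp
  show ?thesis
  proof (cases "T \<le> 2 * s")
    case True
    have "T powr g \<le> (2 * s) powr g" using True assms by (intro powr_mono2) auto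
    also have "\<dots> = 2 powr g * s powr g" using assms by (simp add: powr_mult)
    finally have "c * X \<le> (T - s) * (2 powr g * s powr g)"
      using A assms by (smt (verit) mult_left_mono)
    hence "c / 2 powr g * X * s powr (-g) \<le> (T - s)"
      using assms by (simp add: powr_minus field_simps)
    moreover have "min (c / 2 powr g) c' * X * s powr (- g) \<le> c / 2 powr g * X * s powr (-g)"
      using assms sp by (intro mult_right_mono) auto
    ultimately show ?thesis by linarith
  next
    case False
    have "min (c / 2 powr g) c' * X * s powr (- g) \<le> c' * X * s powr (-g)"
      using assms sp by (intro mult_right_mono) auto
    also have "\<dots> \<le> s powr (1+g) * s powr (-g)" using assms sp by (intro mult_right_mono) auto
    also have "\<dots> = s" using assms by (simp add: powr_add[symmetric])
    finally show ?thesis using False by linarith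
  qed
qed

lemma kap:
  fixes c1 al k g :: real
  assumes "c1 > 0" "al > 0" "k * (1 + g) = 1" "g \<ge> 0" "c1 * al powr k \<le> s"
  shows "c1 powr (1+g) * al \<le> s powr (1+g)"
proof -
  have "(c1 * al powr k) powr (1+g) \<le> s powr (1+g)"
    using assms by (intro powr_mono2) auto
  moreover have "(c1 * al powr k) powr (1+g) = c1 powr (1+g) * al"
    using assms by (simp add: powr_mult powr_powr)
  ultimately show ?thesis by simp
qed

lemma core2:
  fixes s u v T g X c c' C :: real
  assumes "0 < s" "s \<le> u" "u \<le> v" "v \<le> T" "g \<ge> 0" "X > 0" "c > 0" "c' > 0"
    "c * X \<le> integral {u..v} (\<lambda>t. t powr g)" "c' * X \<le> s powr (1 + g)"
    "C \<le> min (c / 2 powr g) c'"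
  shows "C * X * s powr (- g) \<le> T - s"
proof -
  have "C * X * s powr (- g) \<le> min (c / 2 powr g) c' * X * s powr (- g)"
    using assms by (intro mult_right_mono) auto
  also have "\<dots> \<le> T - s" by (rule core[OF assms(1-10)])
  finally show ?thesis .
qed

lemma mono_t:
  fixes t :: "nat \<Rightarrow> real"
  assumes "\<forall>i\<in>{1..<j}. t i < t (i + 1)" "1 \<le> i" "i \<le> k" "k \<le> j"
  shows "t i \<le> t k"
  using assms(3,4)
proof (induction k rule: dec_induct)
  case base then show ?case by simp
next
  case (step n)
  then have "t n < t (Suc n)" using assms(1,2) by auto
  with step show ?case by simp
qed

lemma pos_meas:
  assumes "0 < emeasure M A" "emeasure M A < \<infinity>"
  shows "measure M A > 0"
  using assms emeasure_eq_ennreal_measure[of M A]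
  by (metis ennreal_less_zero_iff infinity_ennreal_def less_irrefl)

lemma main:
  fixes al be g k qa qb qc C a :: real and d :: nat
    and \<Omega> :: "nat \<Rightarrow> ((nat \<Rightarrow> real) \<times> (nat \<Rightarrow> real)) set"
  assumes pos: "al > 0" "be > 0" "be < al" "a \<ge> 0" "g \<ge> 0" "k * (1 + g) = 1"
    "qa > 0" "qb > 0" "qc > 0"
    and C: "C \<le> min (min qb qc / 2 powr g) (qa powr (1 + g))"
    and sub: "\<forall>j\<in>{1..d+1}. \<Omega> j \<subseteq> (PiE {1..j div 2} (\<lambda>_. {1..2})) \<times> (PiE {1..j} (\<lambda>_. {a<..<a+1}))"
    and tw: "\<forall>j\<in>{2..d+1}. \<forall>(r,t)\<in>\<Omega> j. (restrict r {1..(j-1) div 2}, restrict t {1..j-1}) \<in> \<Omega> (j-1)"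
    and ord: "\<forall>j\<in>{1..d+1}. \<forall>(r,t)\<in>\<Omega> j.
        qa * al powr k \<le> t 1 \<and> (\<forall>i\<in>{1..<j}. t i < t (i + 1))"
    and oddc: "\<forall>j\<in>{1..d+1}. odd j \<longrightarrow> j > 1 \<longrightarrow> (\<forall>(r,t)\<in>\<Omega> j.
            qb * al \<le> integral {t (j - 1)..t j} (\<lambda>t. t powr g))"
    and evenc: "\<forall>j\<in>{2..d+1}. even j \<longrightarrow>
        (\<forall>(r,t)\<in>\<Omega> j. qc * be \<le> integral {t (j - 1)..t j} (\<lambda>t. t powr g))"
  shows "\<forall>j\<in>{2..d+1}. \<forall>(r,t)\<in>\<Omega> j.
        (odd j \<longrightarrow> (\<forall>i\<in>{1..j-1}. C * al * t i powr (- g) \<le> t j - t i)) \<and>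
        (even j \<longrightarrow> C * be * t (j - 1) powr (- g) \<le> t j - t (j - 1) \<and>
                     (\<forall>i\<in>{1..j-2}. C * al * t i powr (- g) \<le> t j - t i))"
proof (intro ballI, clarify)
  fix j r t assume j: "j \<in> {2..d+1}" and rt: "(r, t) \<in> \<Omega> j"
  have j1: "j \<in> {1..d+1}" using j by auto
  have tin: "t \<in> PiE {1..j} (\<lambda>_. {a<..<a+1})" using sub j1 rt by blast
  have tpos: "t i > 0" if "i \<in> {1..j}" for i
    using tin that pos(4) PiE_mem[OF tin that] by auto
  have ordj: "qa * al powr k \<le> t 1 \<and> (\<forall>i\<in>{1..<j}. t i < t (i + 1))"
    using bspec[OF ord j1] rt by fast
  hence ordj: "qa * al powr k \<le> t 1" "\<forall>i\<in>{1..<j}. t i < t (i + 1)" by auto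
  have tm: "t i \<le> t m" if "1 \<le> i" "i \<le> m" "m \<le> j" for i m
    using mono_t[OF ordj(2) that] .
  have sb: "qa powr (1+g) * al \<le> t i powr (1+g)" if "i \<in> {1..j}" for i
  proof (rule kap[OF pos(7,1,6,5)])
    show "qa * al powr k \<le> t i" using ordj(1) tm[of 1 i] that by auto
  qed
  have sbb: "qa powr (1+g) * be \<le> t i powr (1+g)" if "i \<in> {1..j}" for i
    using sb[OF that] pos by (smt (verit) mult_left_mono powr_gt_zero)
  have Ca: "C \<le> min (qb / 2 powr g) (qa powr (1 + g))"
    using C by (smt (verit) divide_right_mono powr_ge_zero)
  have Cb: "C \<le> min (qc / 2 powr g) (qa powr (1 + g))"
    using C by (smt (verit) divide_right_mono powr_ge_zero)
  have qap: "qa powr (1+g) > 0" using pos by simp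
  show "(odd j \<longrightarrow> (\<forall>i\<in>{1..j-1}. C * al * t i powr (- g) \<le> t j - t i)) \<and>
        (even j \<longrightarrow> C * be * t (j - 1) powr (- g) \<le> t j - t (j - 1) \<and>
                     (\<forall>i\<in>{1..j-2}. C * al * t i powr (- g) \<le> t j - t i))"
  proof (intro conjI impI ballI)
    fix i assume oj: "odd j" and i: "i \<in> {1..j-1}"
    have I: "qb * al \<le> integral {t (j - 1)..t j} (\<lambda>t. t powr g)"
      using oddc j1 oj j rt by auto
    show "C * al * t i powr (- g) \<le> t j - t i"
      by (rule core2[OF _ _ _ _ pos(5,1,8) qap I _ Ca]) (use i j tpos tm sb in auto)
  next
    assume ej: "even j"
    have I: "qc * be \<le> integral {t (j - 1)..t j} (\<lambda>t. t powr g)"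
      using evenc ej j rt by auto
    show "C * be * t (j - 1) powr (- g) \<le> t j - t (j - 1)"
      by (rule core2[OF _ _ _ _ pos(5,2,9) qap I _ Cb]) (use j tpos tm sbb in auto)
  next
    fix i assume ej: "even j" and i: "i \<in> {1..j-2}"
    have j4: "j \<ge> 4" using ej i by presburger
    define t' where "t' = restrict t {1..j-1}"
    have rt': "(restrict r {1..(j-1) div 2}, t') \<in> \<Omega> (j-1)" using tw j rt t'_def by auto
    have "qb * al \<le> integral {t' (j - 1 - 1)..t' (j-1)} (\<lambda>t. t powr g)"
      using oddc rt' j j4 ej by (auto dest!: bspec[of _ _ "j-1"])
    moreover have "t' (j-1-1) = t (j-2)" "t' (j-1) = t (j-1)" using j4 by (auto simp: t'_def numeral_2_eq_2)
    ultimately have I: "qb * al \<le> integral {t (j-2)..t (j-1)} (\<lambda>t. t powr g)" by simp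
    show "C * al * t i powr (- g) \<le> t j - t i"
      by (rule core2[OF _ _ _ _ pos(5,1,8) qap I _ Ca]) (use i j j4 tpos tm sb in auto)
  qed
qed
theorem corollary5p5:
  fixes K :: nat and c1 c2 c3 c4 c5 :: real
  assumes "CARD('n) \<ge> 2"
    and "c1 > 0" "c2 > 0" "c3 > 0" "c4 > 0" "c5 > 0"
  shows "\<exists>C>0. \<forall>(P :: real \<Rightarrow> real^'n) (a::real) E F (x0::real^'n) (r0::real) \<Omega>.
    (let d = CARD('n);
         \<alpha> = Apair d K a P E F / measure lborel F;
         \<beta> = Apair d K a P E F / measure lborel E;
         \<kappa> = real (d * (d + 1)) / real (2 * K + d * (d + 1));
         \<gamma> = real (2 * K) / real (d * (d + 1))
     in
     (\<forall>i. \<exists>p :: real poly. \<forall>t. P t $ i = poly p t) \<and>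
     a \<ge> 0 \<and>
     E \<in> sets borel \<and> F \<in> sets borel \<and> F \<subseteq> UNIV \<times> {1..2} \<and>
     0 < emeasure lborel E \<and> emeasure lborel E < \<infinity> \<and>
     0 < emeasure lborel F \<and> emeasure lborel F < \<infinity> \<and>
     Apair d K a P E F \<noteq> 0 \<and> \<alpha> > \<beta> \<and>
     (x0, r0) \<in> F \<and>
     type1_tower a (d + 1) \<Omega> \<and>
     (\<forall>j\<in>{1..d+1}. \<forall>(r,t)\<in>\<Omega> j.
        c1 * \<alpha> powr \<kappa> \<le> t 1 \<and> (\<forall>i\<in>{1..<j}. t i < t (i + 1))) \<and>
     (\<forall>j\<in>{1..d+1}. odd j \<longrightarrow>
        (\<forall>(r,t)\<in>\<Omega> j. Psi x0 r0 P j r t \<in> E) \<and>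
        (j = 1 \<longrightarrow> ennreal (c2 * \<alpha>) \<le>
            emeasure (muP d K) (fibre_odd a \<Omega> 1 (\<lambda>_. undefined) (\<lambda>_. undefined))) \<and>
        (j > 1 \<longrightarrow> (\<forall>(r,t)\<in>\<Omega> (j - 1).
            ennreal (c2 * \<alpha>) \<le> emeasure (muP d K) (fibre_odd a \<Omega> j r t))) \<and>
        (j > 1 \<longrightarrow> (\<forall>(r,t)\<in>\<Omega> j.
            c3 * \<alpha> \<le> integral {t (j - 1)..t j} (lamP d K)))) \<and>
     (\<forall>j\<in>{2..d+1}. even j \<longrightarrow>
        (\<forall>(r,t)\<in>\<Omega> j. (Psi x0 r0 P j r t, r (j div 2)) \<in> F) \<and>
        (\<forall>(r,t)\<in>\<Omega> (j - 1).
            ennreal (c4 * \<beta>) \<le> emeasure (nuP d K) (fibre_even a \<Omega> j r t)) \<and>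
        (\<forall>(r,t)\<in>\<Omega> j. c5 * \<beta> \<le> integral {t (j - 1)..t j} (lamP d K)))
     \<longrightarrow>
     (\<forall>j\<in>{2..d+1}. \<forall>(r,t)\<in>\<Omega> j.
        (odd j \<longrightarrow> (\<forall>i\<in>{1..j-1}. C * \<alpha> * t i powr (- \<gamma>) \<le> t j - t i)) \<and>
        (even j \<longrightarrow> C * \<beta> * t (j - 1) powr (- \<gamma>) \<le> t j - t (j - 1) \<and>
                     (\<forall>i\<in>{1..j-2}. C * \<alpha> * t i powr (- \<gamma>) \<le> t j - t i))))"
  proof -
  define d where "d = CARD('n)"
  define g :: real where "g = real (2 * K) / real (d * (d + 1))"
  define k :: real where "k = real (d * (d + 1)) / real (2 * K + d * (d + 1))"
  define C where "C = min (min c3 c5 / 2 powr g) (c1 powr (1 + g))"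
  have dpos: "real (d * (d + 1)) > 0" unfolding d_def by (simp add: add_pos_pos)
  have g0: "g \<ge> 0" unfolding g_def by simp
  have kg: "k * (1 + g) = 1"
  proof -
    define D where "D = real (d * (d + 1))"
    have D: "D > 0" using dpos D_def by simp
    have "k = D / (2 * real K + D)" unfolding k_def D_def by simp
    moreover have "g = 2 * real K / D" unfolding g_def D_def by simp
    moreover have "2 * real K + D > 0" using D by simp
    ultimately have "k * (1 + g) = D / (2 * real K + D) * ((2 * real K + D) / D)"
      using D by (simp add: add_divide_distrib)
    thus ?thesis using D \<open>2 * real K + D > 0\<close> by simp
  qed
  have lam: "lamP d K = (\<lambda>t. t powr g)" by (simp add: lamP_def g_def fun_eq_iff)
  have Cpos: "C > 0" unfolding C_def using assms by simp
  show ?thesis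
  proof (intro exI[of _ C] conjI Cpos allI impI)
    fix P :: "real \<Rightarrow> real^'n" and a :: real and E F and x0 :: "real^'n" and r0 :: real and \<Omega>
    show "let d = CARD('n);
         \<alpha> = Apair d K a P E F / measure lborel F;
         \<beta> = Apair d K a P E F / measure lborel E;
         \<kappa> = real (d * (d + 1)) / real (2 * K + d * (d + 1));
         \<gamma> = real (2 * K) / real (d * (d + 1))
     in
     (\<forall>i. \<exists>p :: real poly. \<forall>t. P t $ i = poly p t) \<and>
     a \<ge> 0 \<and>
     E \<in> sets borel \<and> F \<in> sets borel \<and> F \<subseteq> UNIV \<times> {1..2} \<and>
     0 < emeasure lborel E \<and> emeasure lborel E < \<infinity> \<and>
     0 < emeasure lborel F \<and> emeasure lborel F < \<infinity> \<and>
     Apair d K a P E F \<noteq> 0 \<and> \<alpha> > \<beta> \<and>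
     (x0, r0) \<in> F \<and>
     type1_tower a (d + 1) \<Omega> \<and>
     (\<forall>j\<in>{1..d+1}. \<forall>(r,t)\<in>\<Omega> j.
        c1 * \<alpha> powr \<kappa> \<le> t 1 \<and> (\<forall>i\<in>{1..<j}. t i < t (i + 1))) \<and>
     (\<forall>j\<in>{1..d+1}. odd j \<longrightarrow>
        (\<forall>(r,t)\<in>\<Omega> j. Psi x0 r0 P j r t \<in> E) \<and>
        (j = 1 \<longrightarrow> ennreal (c2 * \<alpha>) \<le>
            emeasure (muP d K) (fibre_odd a \<Omega> 1 (\<lambda>_. undefined) (\<lambda>_. undefined))) \<and>
        (j > 1 \<longrightarrow> (\<forall>(r,t)\<in>\<Omega> (j - 1).
            ennreal (c2 * \<alpha>) \<le> emeasure (muP d K) (fibre_odd a \<Omega> j r t))) \<and>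
        (j > 1 \<longrightarrow> (\<forall>(r,t)\<in>\<Omega> j.
            c3 * \<alpha> \<le> integral {t (j - 1)..t j} (lamP d K)))) \<and>
     (\<forall>j\<in>{2..d+1}. even j \<longrightarrow>
        (\<forall>(r,t)\<in>\<Omega> j. (Psi x0 r0 P j r t, r (j div 2)) \<in> F) \<and>
        (\<forall>(r,t)\<in>\<Omega> (j - 1).
            ennreal (c4 * \<beta>) \<le> emeasure (nuP d K) (fibre_even a \<Omega> j r t)) \<and>
        (\<forall>(r,t)\<in>\<Omega> j. c5 * \<beta> \<le> integral {t (j - 1)..t j} (lamP d K)))
     \<longrightarrow>
     (\<forall>j\<in>{2..d+1}. \<forall>(r,t)\<in>\<Omega> j.
        (odd j \<longrightarrow> (\<forall>i\<in>{1..j-1}. C * \<alpha> * t i powr (- \<gamma>) \<le> t j - t i)) \<and>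
        (even j \<longrightarrow> C * \<beta> * t (j - 1) powr (- \<gamma>) \<le> t j - t (j - 1) \<and>
                     (\<forall>i\<in>{1..j-2}. C * \<alpha> * t i powr (- \<gamma>) \<le> t j - t i)))"
      unfolding Let_def d_def[symmetric] g_def[symmetric] k_def[symmetric] lam
    proof (intro impI)
      let ?A = "Apair d K a P E F"
      let ?al = "?A / measure lborel F" and ?be = "?A / measure lborel E"
      assume H: "(\<forall>i. \<exists>p :: real poly. \<forall>t. P t $ i = poly p t) \<and>
     a \<ge> 0 \<and>
     E \<in> sets borel \<and> F \<in> sets borel \<and> F \<subseteq> UNIV \<times> {1..2} \<and>
     0 < emeasure lborel E \<and> emeasure lborel E < \<infinity> \<and>
     0 < emeasure lborel F \<and> emeasure lborel F < \<infinity> \<and>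
     ?A \<noteq> 0 \<and> ?al > ?be \<and>
     (x0, r0) \<in> F \<and>
     type1_tower a (d + 1) \<Omega> \<and>
     (\<forall>j\<in>{1..d+1}. \<forall>(r,t)\<in>\<Omega> j.
        c1 * ?al powr k \<le> t 1 \<and> (\<forall>i\<in>{1..<j}. t i < t (i + 1))) \<and>
     (\<forall>j\<in>{1..d+1}. odd j \<longrightarrow>
        (\<forall>(r,t)\<in>\<Omega> j. Psi x0 r0 P j r t \<in> E) \<and>
        (j = 1 \<longrightarrow> ennreal (c2 * ?al) \<le>
            emeasure (muP d K) (fibre_odd a \<Omega> 1 (\<lambda>_. undefined) (\<lambda>_. undefined))) \<and>
        (j > 1 \<longrightarrow> (\<forall>(r,t)\<in>\<Omega> (j - 1).
            ennreal (c2 * ?al) \<le> emeasure (muP d K) (fibre_odd a \<Omega> j r t))) \<and>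
        (j > 1 \<longrightarrow> (\<forall>(r,t)\<in>\<Omega> j.
            c3 * ?al \<le> integral {t (j - 1)..t j} (\<lambda>t. t powr g)))) \<and>
     (\<forall>j\<in>{2..d+1}. even j \<longrightarrow>
        (\<forall>(r,t)\<in>\<Omega> j. (Psi x0 r0 P j r t, r (j div 2)) \<in> F) \<and>
        (\<forall>(r,t)\<in>\<Omega> (j - 1).
            ennreal (c4 * ?be) \<le> emeasure (nuP d K) (fibre_even a \<Omega> j r t)) \<and>
        (\<forall>(r,t)\<in>\<Omega> j. c5 * ?be \<le> integral {t (j - 1)..t j} (\<lambda>t. t powr g)))"
      note Ane = H[THEN conjunct2, THEN conjunct2, THEN conjunct2, THEN conjunct2, THEN conjunct2, THEN conjunct2, THEN conjunct2, THEN conjunct2, THEN conjunct2, THEN conjunct1]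
      note a0 = H[THEN conjunct2, THEN conjunct1]
      note ab = H[THEN conjunct2, THEN conjunct2, THEN conjunct2, THEN conjunct2, THEN conjunct2, THEN conjunct2, THEN conjunct2, THEN conjunct2, THEN conjunct2, THEN conjunct2, THEN conjunct1]
      note tw = H[THEN conjunct2, THEN conjunct2, THEN conjunct2, THEN conjunct2, THEN conjunct2, THEN conjunct2, THEN conjunct2, THEN conjunct2, THEN conjunct2, THEN conjunct2, THEN conjunct2, THEN conjunct2, THEN conjunct1]
      note H14 = H[THEN conjunct2, THEN conjunct2, THEN conjunct2, THEN conjunct2, THEN conjunct2, THEN conjunct2, THEN conjunct2, THEN conjunct2, THEN conjunct2, THEN conjunct2, THEN conjunct2, THEN conjunct2, THEN conjunct2, THEN conjunct1]
      note H15 = H[THEN conjunct2, THEN conjunct2, THEN conjunct2, THEN conjunct2, THEN conjunct2, THEN conjunct2, THEN conjunct2, THEN conjunct2, THEN conjunct2, THEN conjunct2, THEN conjunct2, THEN conjunct2, THEN conjunct2, THEN conjunct2, THEN conjunct1]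
      note H16 = H[THEN conjunct2, THEN conjunct2, THEN conjunct2, THEN conjunct2, THEN conjunct2, THEN conjunct2, THEN conjunct2, THEN conjunct2, THEN conjunct2, THEN conjunct2, THEN conjunct2, THEN conjunct2, THEN conjunct2, THEN conjunct2, THEN conjunct2]
      have A0: "?A \<ge> 0" unfolding Apair_def
        by (rule integral_nonneg_AE, rule AE_I2, rule mult_nonneg_nonneg, simp,
            rule integral_nonneg_AE, rule AE_I2) (simp add: lamP_def)
      have Apos: "?A > 0" using A0 Ane by linarith
      have mF: "measure lborel F > 0" using H[THEN conjunct2, THEN conjunct2, THEN conjunct2, THEN conjunct2, THEN conjunct2, THEN conjunct2, THEN conjunct2, THEN conjunct1] H[THEN conjunct2, THEN conjunct2, THEN conjunct2, THEN conjunct2, THEN conjunct2, THEN conjunct2, THEN conjunct2, THEN conjunct2, THEN conjunct1] by (rule pos_meas)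
      have mE: "measure lborel E > 0" using H[THEN conjunct2, THEN conjunct2, THEN conjunct2, THEN conjunct2, THEN conjunct2, THEN conjunct1] H[THEN conjunct2, THEN conjunct2, THEN conjunct2, THEN conjunct2, THEN conjunct2, THEN conjunct2, THEN conjunct1] by (rule pos_meas)
      have alp: "?al > 0" "?be > 0" using Apos mF mE by auto
      show "\<forall>j\<in>{2..d+1}. \<forall>(r,t)\<in>\<Omega> j.
        (odd j \<longrightarrow> (\<forall>i\<in>{1..j-1}. C * ?al * t i powr (- g) \<le> t j - t i)) \<and>
        (even j \<longrightarrow> C * ?be * t (j - 1) powr (- g) \<le> t j - t (j - 1) \<and>
                     (\<forall>i\<in>{1..j-2}. C * ?al * t i powr (- g) \<le> t j - t i))"
      proof (rule main[where k=k and qa=c1 and qb=c3 and qc=c5 and a=a])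
        show "C \<le> min (min c3 c5 / 2 powr g) (c1 powr (1 + g))" by (simp add: C_def)
        show "\<forall>j\<in>{1..d+1}. \<Omega> j \<subseteq> (PiE {1..j div 2} (\<lambda>_. {1..2})) \<times> (PiE {1..j} (\<lambda>_. {a<..<a+1}))"
          using tw unfolding type1_tower_def by blast
        show "\<forall>j\<in>{2..d+1}. \<forall>(r,t)\<in>\<Omega> j. (restrict r {1..(j-1) div 2}, restrict t {1..j-1}) \<in> \<Omega> (j-1)"
          using tw unfolding type1_tower_def by blast
        show "\<forall>j\<in>{1..d+1}. odd j \<longrightarrow> j > 1 \<longrightarrow> (\<forall>(r,t)\<in>\<Omega> j.
            c3 * ?al \<le> integral {t (j - 1)..t j} (\<lambda>t. t powr g))" using H15 by blast
        show "\<forall>j\<in>{2..d+1}. even j \<longrightarrow>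
          (\<forall>(r,t)\<in>\<Omega> j. c5 * ?be \<le> integral {t (j - 1)..t j} (\<lambda>t. t powr g))" using H16 by blast
        show "\<forall>j\<in>{1..d+1}. \<forall>(r,t)\<in>\<Omega> j.
          c1 * ?al powr k \<le> t 1 \<and> (\<forall>i\<in>{1..<j}. t i < t (i + 1))" using H14 by blast
      qed (use alp a0 ab assms(2,4,6) g0 kg in auto)
    qed
  qed
qed

end
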